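(* Let $\mathcal G=(\mathcal V,\mathcal E,w)$ be a finite, undirected, connected graph with $n$ vertices and positive edge weights, and let $Q=D+A$ be its signless Laplacian matrix. Let $w^*>0$ be a real number that is the weight of at least one $(m,k)$-star of $\mathcal G$. Let $\mathcal S_{w^*}$ be the set of all $(m,k)$-stars of $\mathcal G$ (as $m,k$ range over the positive integers with $m+k\le n$) whose weight is defined and equals $w^*$, and let $\deg(\mathcal S_{w^*})=\sum_{S_{m,k}\in\mathcal S_{w^*}}(m-1)$. Then $w^*$ is an eigenvalue of $Q$ with algebraic multiplicity at least $\deg(\mathcal S_{w^*})$.
   Context: Weighted adjacency matrix: $A_{ij}=w(i,j)$ if $\{i,j\}\in\mathcal E$ and $A_{ij}=0$ otherwise (no loops); $D=\mathrm{diag}(s(1),\dots,s(n))$ with strength $s(i)=\sum_jA_{ij}$. An $(m,k)$-star of $\mathcal G$, denoted $S_{m,k}$, is a pair $(\mathcal V_1,\mathcal V_2)$ of disjoint vertex sets with $|\mathcal V_1|=m\ge 2$, $|\mathcal V_2|=k$, such that every vertex of $\mathcal V_1$ is adjacent to every vertex of $\mathcal V_2$ and to no vertex outside $\mathcal V_2$; the sets are uniquely determined, i.e. $\mathcal V_1$ is the set of all vertices whose neighbourhood is exactly $\mathcal V_2$ (so distinct stars have disjoint $\mathcal V_1$). Its degree is $m-1$. Its weight is defined only when $w(i,j)=w(i',j)$ for all $i,i'\in\mathcal V_1$, $j\in\mathcal V_2$, and then equals $\sum_{j\in\mathcal V_2}w(i,j)$ for any $i\in\mathcal V_1$. *)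

theory Defs
  imports "Jordan_Normal_Form.Char_Poly"
begin

text \<open>A weighted undirected graph on vertex set {0..<n} is encoded by its weighted
adjacency function A: A i j = w(i,j) > 0 if {i,j} is an edge, A i j = 0 otherwise.\<close>

definition weighted_graph :: "nat \<Rightarrow> (nat \<Rightarrow> nat \<Rightarrow> real) \<Rightarrow> bool" where
  "weighted_graph n A \<longleftrightarrow> n \<ge> 1 \<and>
     (\<forall>i j. A i j = A j i) \<and> (\<forall>i j. A i j \<ge> 0) \<and> (\<forall>i. A i i = 0) \<and>
     (\<forall>i j. (i \<ge> n \<or> j \<ge> n) \<longrightarrow> A i j = 0)"

definition adj :: "nat \<Rightarrow> (nat \<Rightarrow> nat \<Rightarrow> real) \<Rightarrow> nat \<Rightarrow> nat \<Rightarrow> bool" where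
  "adj n A i j \<longleftrightarrow> i < n \<and> j < n \<and> A i j > 0"

definition connected_graph :: "nat \<Rightarrow> (nat \<Rightarrow> nat \<Rightarrow> real) \<Rightarrow> bool" where
  "connected_graph n A \<longleftrightarrow> (\<forall>i<n. \<forall>j<n. (adj n A)\<^sup>*\<^sup>* i j)"

definition nbhd :: "nat \<Rightarrow> (nat \<Rightarrow> nat \<Rightarrow> real) \<Rightarrow> nat \<Rightarrow> nat set" where
  "nbhd n A i = {j. adj n A i j}"

definition strength :: "nat \<Rightarrow> (nat \<Rightarrow> nat \<Rightarrow> real) \<Rightarrow> nat \<Rightarrow> real" where
  "strength n A i = (\<Sum>j<n. A i j)"

definition signless_laplacian :: "nat \<Rightarrow> (nat \<Rightarrow> nat \<Rightarrow> real) \<Rightarrow> real mat" where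
  "signless_laplacian n A =
     mat n n (\<lambda>(i,j). (if i = j then strength n A i else 0) + A i j)"

definition is_star :: "nat \<Rightarrow> (nat \<Rightarrow> nat \<Rightarrow> real) \<Rightarrow> nat \<Rightarrow> nat \<Rightarrow> nat set \<Rightarrow> nat set \<Rightarrow> bool" where
  "is_star n A m k V1 V2 \<longleftrightarrow>
     V1 \<subseteq> {0..<n} \<and> V2 \<subseteq> {0..<n} \<and> V1 \<inter> V2 = {} \<and>
     card V1 = m \<and> m \<ge> 2 \<and> card V2 = k \<and> k \<ge> 1 \<and> m + k \<le> n \<and>
     V1 = {i. i < n \<and> nbhd n A i = V2}"

definition star_weight_defined :: "(nat \<Rightarrow> nat \<Rightarrow> real) \<Rightarrow> nat set \<Rightarrow> nat set \<Rightarrow> bool" where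
  "star_weight_defined A V1 V2 \<longleftrightarrow> (\<forall>i\<in>V1. \<forall>i'\<in>V1. \<forall>j\<in>V2. A i j = A i' j)"

definition star_weight :: "(nat \<Rightarrow> nat \<Rightarrow> real) \<Rightarrow> nat set \<Rightarrow> nat set \<Rightarrow> real" where
  "star_weight A V1 V2 = (\<Sum>j\<in>V2. A (SOME i. i \<in> V1) j)"

definition stars_of_weight :: "nat \<Rightarrow> (nat \<Rightarrow> nat \<Rightarrow> real) \<Rightarrow> real \<Rightarrow> (nat set \<times> nat set) set" where
  "stars_of_weight n A ws = {(V1, V2). \<exists>m k. is_star n A m k V1 V2 \<and>
       star_weight_defined A V1 V2 \<and> star_weight A V1 V2 = ws}"

definition stars_degree :: "nat \<Rightarrow> (nat \<Rightarrow> nat \<Rightarrow> real) \<Rightarrow> real \<Rightarrow> nat" where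
  "stars_degree n A ws = (\<Sum>(V1, V2)\<in>stars_of_weight n A ws. card V1 - 1)"

end

theory Submission
  imports Defs
begin

lemma det_dvd_rows:
  fixes C :: "'a :: comm_ring_1 mat"
  assumes C: "C \<in> carrier_mat n n" and S: "S \<subseteq> {0..<n}"
    and dv: "\<And>i j. i \<in> S \<Longrightarrow> j < n \<Longrightarrow> q dvd C $$ (i,j)"
  shows "q ^ card S dvd det C"
proof -
  have "q ^ card S dvd signof p * (\<Prod> i = 0 ..< n. C $$ (i, p i))"
    if p: "p permutes {0..<n}" for p
  proof -
    have "(\<Prod>i\<in>S. q) dvd (\<Prod> i = 0 ..< n. C $$ (i, p i))"
      by (rule prod_dvd_prod_subset2[OF _ S], simp, rule dv, auto,
          insert p S, auto simp: permutes_in_image)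
    then show ?thesis by (simp add: dvd_mult2 mult.commute)
  qed
  then show ?thesis unfolding det_def using C by (auto intro!: dvd_sum)
qed

lemma star_facts:
  assumes wg: "weighted_graph n A" and st: "(V1,V2) \<in> stars_of_weight n A ws"
  shows "V1 \<subseteq> {0..<n}" "V2 \<subseteq> {0..<n}" "card V1 \<ge> 2" "finite V1"
    "V1 = {i. i < n \<and> nbhd n A i = V2}"
    "\<And>i i' j. i \<in> V1 \<Longrightarrow> i' \<in> V1 \<Longrightarrow> A i j = A i' j"
    "\<And>i. i \<in> V1 \<Longrightarrow> strength n A i = ws"
proof -
  from st obtain m k where ist: "is_star n A m k V1 V2" and wd: "star_weight_defined A V1 V2"
    and sw: "star_weight A V1 V2 = ws" unfolding stars_of_weight_def by auto
  from ist show V1: "V1 \<subseteq> {0..<n}" and V2: "V2 \<subseteq> {0..<n}" and "card V1 \<ge> 2"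
    and eq: "V1 = {i. i < n \<and> nbhd n A i = V2}"
    unfolding is_star_def by auto
  show "finite V1" using V1 finite_subset by blast
  have zero: "A i j = 0" if "i \<in> V1" "j \<notin> V2" for i j
  proof (cases "j < n")
    case True
    from that eq have "nbhd n A i = V2" "i < n" by auto
    with that True have "\<not> A i j > 0" unfolding nbhd_def adj_def by auto
    moreover have "A i j \<ge> 0" using wg unfolding weighted_graph_def by blast
    ultimately show ?thesis by linarith
  next
    case False
    with wg show ?thesis unfolding weighted_graph_def by auto
  qed
  show row: "A i j = A i' j" if "i \<in> V1" "i' \<in> V1" for i i' j
  proof (cases "j \<in> V2")
    case True
    show ?thesis using wd that True unfolding star_weight_defined_def by blast
  next
    case False
    show ?thesis using zero[OF that(1) False] zero[OF that(2) False] by simp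
  qed
  show "strength n A i = ws" if i: "i \<in> V1" for i
  proof -
    have "strength n A i = (\<Sum>j\<in>V2. A i j)"
      unfolding strength_def lessThan_atLeast0
      by (rule sum.mono_neutral_right) (use V2 zero[OF i] in auto)
    also have "\<dots> = (\<Sum>j\<in>V2. A (SOME i. i \<in> V1) j)"
      by (rule sum.cong, simp, rule row[OF i], rule someI[of "\<lambda>x. x \<in> V1", OF i])
    finally show ?thesis using sw unfolding star_weight_def by simp
  qed
qed

theorem corollary1:
  fixes n :: nat and A :: "nat \<Rightarrow> nat \<Rightarrow> real" and ws :: real
  assumes "weighted_graph n A"
    and "connected_graph n A"
    and "ws > 0"
    and "stars_of_weight n A ws \<noteq> {}"
  shows "eigenvalue (signless_laplacian n A) ws \<and>
         order ws (char_poly (signless_laplacian n A)) \<ge> stars_degree n A ws"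
proof -
  note wg = assms(1)
  define Sw where "Sw = stars_of_weight n A ws"
  note sf = star_facts[OF wg, where ws=ws, folded Sw_def]
  have finSw: "finite Sw"
  proof (rule finite_subset)
    show "Sw \<subseteq> Pow {0..<n} \<times> Pow {0..<n}" using sf(1,2) by fastforce
  qed simp
  have disj: "(V1,V2) = (W1,W2)" if "(V1,V2) \<in> Sw" "(W1,W2) \<in> Sw" "i \<in> V1" "i \<in> W1"
    for V1 V2 W1 W2 i
  proof -
    have e1: "V1 = {i. i < n \<and> nbhd n A i = V2}" by (rule sf(5)[OF that(1)])
    have e2: "W1 = {i. i < n \<and> nbhd n A i = W2}" by (rule sf(5)[OF that(2)])
    from e1 e2 that(3,4) have "V2 = W2" by auto
    with e1 e2 show ?thesis by simp
  qed
  define f where "f = (\<lambda>(V1::nat set, V2::nat set). V1 - {Min V1})"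
  define S where "S = (\<Union>x\<in>Sw. f x)"
  define r where "r = (\<lambda>i. Min {i'. i' < n \<and> nbhd n A i' = nbhd n A i})"
  have cardf: "card (f x) = (case x of (V1,V2) \<Rightarrow> card V1 - 1)" if "x \<in> Sw" for x
  proof -
    obtain V1 V2 where x: "x = (V1,V2)" by fastforce
    have "finite V1" "card V1 \<ge> 2" using sf(3,4) that x by auto
    then have "V1 \<noteq> {}" by auto
    then have "Min V1 \<in> V1" using \<open>finite V1\<close> by simp
    then show ?thesis unfolding x f_def using \<open>finite V1\<close> by simp
  qed
  have cardS: "card S = stars_degree n A ws"
  proof -
    have "card S = (\<Sum>x\<in>Sw. card (f x))"
      unfolding S_def
    proof (rule card_UN_disjoint[OF finSw])
      show "\<forall>x\<in>Sw. finite (f x)" using sf(4) unfolding f_def by auto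
      show "\<forall>x\<in>Sw. \<forall>y\<in>Sw. x \<noteq> y \<longrightarrow> f x \<inter> f y = {}"
        unfolding f_def using disj by fastforce
    qed
    also have "\<dots> = stars_degree n A ws"
      unfolding stars_degree_def Sw_def[symmetric] using cardf by (auto intro: sum.cong)
    finally show ?thesis .
  qed
  have Sprops: "\<exists>V1 V2. (V1,V2) \<in> Sw \<and> i \<in> V1 \<and> r i \<in> V1 \<and> r i < i" if "i \<in> S" for i
  proof -
    from that obtain V1 V2 where x: "(V1,V2) \<in> Sw" and i: "i \<in> V1" "i \<noteq> Min V1"
      unfolding S_def f_def by auto
    have e: "V1 = {i. i < n \<and> nbhd n A i = V2}" by (rule sf(5)[OF x])
    with i have "nbhd n A i = V2" by auto
    with e have "r i = Min V1" unfolding r_def by simp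
    moreover have "finite V1" using sf(4)[OF x] .
    ultimately have "r i \<in> V1" "r i < i" using i
      by (auto intro: Min_in, metis Min_le le_neq_implies_less)
    with x i show ?thesis by blast
  qed
  have finS: "finite S" unfolding S_def f_def using finSw sf(4) by auto
  have Ssub: "S \<subseteq> {0..<n}" unfolding S_def f_def using sf(1) by fastforce
  have Spos: "card S > 0"
  proof -
    from assms(4) obtain V1 V2 where x: "(V1,V2) \<in> Sw" unfolding Sw_def by auto
    have "card (f (V1,V2)) = card V1 - 1" using cardf[OF x] by simp
    with sf(3)[OF x] have "f (V1,V2) \<noteq> {}" by auto
    moreover have "f (V1,V2) \<subseteq> S" unfolding S_def using x by blast
    ultimately show ?thesis using finS by (auto simp: card_gt_0_iff)
  qed
  define Q where "Q = signless_laplacian n A"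
  have Qc: "Q \<in> carrier_mat n n" unfolding Q_def signless_laplacian_def by simp
  define C where "C = char_poly_matrix Q"
  have Cc: "C \<in> carrier_mat n n" unfolding C_def using Qc by simp
  have Cij: "C $$ (i,j) = (if i = j then [:0,1:] else 0) +
      [:- ((if i = j then strength n A i else 0) + A i j):]" if "i < n" "j < n" for i j
    using that Qc unfolding C_def char_poly_matrix_def Q_def signless_laplacian_def by auto
  define P :: "real poly mat" where
    "P = mat n n (\<lambda>(i,k). if i = k then 1 else if i \<in> S \<and> k = r i then -1 else 0)"
  have Pc: "P \<in> carrier_mat n n" unfolding P_def by simp
  have detP: "det P = 1"
  proof -
    have "det P = prod_list (diag_mat P)"
    proof (rule det_lower_triangular[OF _ Pc])
      fix i k assume ik: "i < k" "k < n"
      show "P $$ (i,k) = 0"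
      proof (cases "i \<in> S \<and> k = r i")
        case True
        then show ?thesis using Sprops[of i] ik by auto
      next
        case False
        then show ?thesis using ik unfolding P_def by auto
      qed
    qed
    also have "\<dots> = 1" unfolding prod_list_diag_prod using Pc unfolding P_def by simp
    finally show ?thesis .
  qed
  have detPC: "det (P * C) = char_poly Q"
    using det_mult[OF Pc Cc] detP unfolding char_poly_def C_def by simp
  have rows: "[:-ws,1:] dvd (P * C) $$ (i,j)" if i: "i \<in> S" and j: "j < n" for i j
  proof -
    from Sprops[OF i] obtain V1 V2 where x: "(V1,V2) \<in> Sw" and iV: "i \<in> V1" "r i \<in> V1"
      and ri: "r i < i" by blast
    have "i < n" using Ssub i by auto
    have rn: "r i < n" using ri \<open>i < n\<close> by simp
    have "(P * C) $$ (i,j) = (\<Sum>k = 0..<n. P $$ (i,k) * C $$ (k,j))"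
      using Pc Cc \<open>i < n\<close> j by (simp add: scalar_prod_def)
    also have "\<dots> = (\<Sum>k = 0..<n. (if k = i then C $$ (k,j) else 0) - (if k = r i then C $$ (k,j) else 0))"
      by (rule sum.cong, simp, insert ri i \<open>i < n\<close>, auto simp: P_def)
    also have "\<dots> = C $$ (i,j) - C $$ (r i, j)"
      using \<open>i < n\<close> rn by (simp add: sum_subtractf)
    also have "\<dots> = [:-ws,1:] * [: (if i = j then 1 else 0) - (if r i = j then 1 else 0) :]"
    proof -
      have a: "A i j = A (r i) j" by (rule sf(6)[OF x iV])
      have s1: "strength n A i = ws" "strength n A (r i) = ws" using sf(7)[OF x] iV by auto
      show ?thesis unfolding Cij[OF \<open>i < n\<close> j] Cij[OF rn j] a s1 using ri
        by (cases "i = j"; cases "r i = j"; simp)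
    qed
    finally show ?thesis by (rule dvdI)
  qed
  have "[:-ws,1:] ^ card S dvd det (P * C)"
    by (rule det_dvd_rows[OF mult_carrier_mat[OF Pc Cc] Ssub rows])
  then have dv: "[:-ws,1:] ^ card S dvd char_poly Q" unfolding detPC .
  have nz: "char_poly Q \<noteq> 0" using degree_monic_char_poly[OF Qc] by auto
  have ord: "card S \<le> order ws (char_poly Q)" by (rule order_max[OF dv nz])
  have "poly (char_poly Q) ws = 0" using ord Spos nz by (simp add: order_root)
  then have "eigenvalue Q ws" using eigenvalue_root_char_poly[OF Qc] by simp
  then show ?thesis using ord cardS unfolding Q_def by simp
qed

end
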